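(* Let $g:\mathbb{R}\to\mathbb{R}$ be semi-convex (on $\mathbb{R}$) with a modulus $\omega$ such that $$\int_0^1\frac{\omega(t)}{t}\,dt<\infty.$$ Then there exists a separately convex function $f:\mathbb{R}^2\to\mathbb{R}$ such that $f(u,u)=g(u)$ for each $u\in\mathbb{R}$.
   Context: A function $f:\mathbb{R}^d\to\mathbb{R}$ is called separately convex if it is convex on every line parallel to a coordinate axis. A modulus is a non-decreasing function $\omega:[0,\infty)\to[0,\infty)$ with $\lim_{t\to0+}\omega(t)=0$. For a convex set $M$, a real function $g$ defined on a superset of $M$ is semi-convex with modulus $\omega$ on $M$ if $$g(\alpha x+(1-\alpha)y)\le \alpha g(x)+(1-\alpha)g(y)+\alpha(1-\alpha)\|x-y\|\,\omega(\|x-y\|)$$ for all $x,y\in M$ and all $\alpha\in(0,1)$. *)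

theory Defs
  imports "HOL-Analysis.Analysis"
begin

text \<open>A modulus: a non-decreasing function from [0,inf) to [0,inf) tending to 0 at 0+.
  Only its values on [0,inf) matter.\<close>
definition modulus :: "(real \<Rightarrow> real) \<Rightarrow> bool" where
  "modulus \<omega> \<longleftrightarrow> mono_on {0..} \<omega> \<and> (\<forall>t\<ge>0. \<omega> t \<ge> 0) \<and> (\<omega> \<longlongrightarrow> 0) (at_right 0)"

definition semiconvex_on :: "'a::real_normed_vector set \<Rightarrow> ('a \<Rightarrow> real) \<Rightarrow> (real \<Rightarrow> real) \<Rightarrow> bool" where
  "semiconvex_on M g \<omega> \<longleftrightarrow>
     (\<forall>x\<in>M. \<forall>y\<in>M. \<forall>\<alpha>::real. 0 < \<alpha> \<and> \<alpha> < 1 \<longrightarrow>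
        g (\<alpha> *\<^sub>R x + (1 - \<alpha>) *\<^sub>R y) \<le> \<alpha> * g x + (1 - \<alpha>) * g y
          + \<alpha> * (1 - \<alpha>) * norm (x - y) * \<omega> (norm (x - y)))"

definition separately_convex :: "('a::euclidean_space \<Rightarrow> real) \<Rightarrow> bool" where
  "separately_convex f \<longleftrightarrow> (\<forall>x. \<forall>b\<in>Basis. convex_on UNIV (\<lambda>t::real. f (x + t *\<^sub>R b)))"

end

theory Submission
  imports Defs
begin


lemma convex_max3:
  "convex_on UNIV (\<lambda>t::real. max (a1 + b1*t) (max (a2 + b2*t) (a3 + b3*t)))"
proof (rule convex_onI)
  fix u x y :: real assume u: "0 < u" "u < 1"
  define h where "h = (\<lambda>t::real. max (a1 + b1*t) (max (a2 + b2*t) (a3 + b3*t)))"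
  have e: "\<And>a b. a + b * ((1-u) *\<^sub>R x + u *\<^sub>R y) = (1-u)*(a + b*x) + u*(a+b*y)"
    by (simp add: algebra_simps)
  have m: "\<And>a b. (1-u)*(a + b*x) + u*(a+b*y) \<le> (1-u) * h x + u * h y \<or> True" by simp
  have k: "\<And>a b. a + b*x \<le> h x \<Longrightarrow> a + b*y \<le> h y \<Longrightarrow> (1-u)*(a + b*x) + u*(a+b*y) \<le> (1-u) * h x + u * h y"
    using u by (intro add_mono mult_left_mono) auto
  show "h ((1 - u) *\<^sub>R x + u *\<^sub>R y) \<le> (1 - u) * h x + u * h y"
    unfolding h_def e using k[of a1 b1] k[of a2 b2] k[of a3 b3] by (auto simp: h_def)
qed simp

lemma convex_on_affine: "convex_on UNIV (\<lambda>t::real. a + b*t)"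
  using convex_max3[of a b a b a b] by simp

definition Bk :: "real \<Rightarrow> real \<Rightarrow> real \<Rightarrow> real" where
  "Bk r a b = (if \<bar>a\<bar> \<le> r \<and> \<bar>b\<bar> \<le> r then - (a*b) else r * \<bar>a - b\<bar> - r\<^sup>2)"

lemma Bk_sym: "Bk r a b = Bk r b a"
  unfolding Bk_def by (auto simp: abs_minus_commute mult.commute)

lemma Bk_inside:
  fixes a b r :: real
  assumes "\<bar>a\<bar> \<le> r" "\<bar>b\<bar> \<le> r" shows "r * \<bar>a - b\<bar> - r\<^sup>2 \<le> - (a*b)"
proof (cases "a \<le> b")
  case True
  have "(b - r) * (a + r) \<le> 0" using assms by (intro mult_nonpos_nonneg) auto
  then show ?thesis using True by (simp add: algebra_simps power2_eq_square)
next
  case False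
  have "(a - r) * (b + r) \<le> 0" using assms by (intro mult_nonpos_nonneg) auto
  then show ?thesis using False by (simp add: algebra_simps power2_eq_square)
qed

lemma Bk_outside:
  fixes a b r :: real
  assumes "\<not> \<bar>a\<bar> \<le> r" "\<bar>b\<bar> \<le> r" shows "- (a*b) \<le> r * \<bar>a - b\<bar> - r\<^sup>2"
proof (cases "a > r")
  case True
  have "0 \<le> (a - r) * (b + r)" using assms True by (intro mult_nonneg_nonneg) auto
  moreover have "\<bar>a - b\<bar> = a - b" using True assms by auto
  ultimately show ?thesis by (simp add: algebra_simps power2_eq_square)
next
  case False
  then have a: "a < -r" using assms by auto
  have "0 \<le> (r - b) * (- a - r)" using assms a by (intro mult_nonneg_nonneg) auto
  moreover have "\<bar>a - b\<bar> = b - a" using a assms by auto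
  ultimately show ?thesis by (simp add: algebra_simps power2_eq_square)
qed

lemma Bk_max:
  fixes a b r :: real
  assumes r: "r \<ge> 0"
  shows "Bk r a b = (if \<bar>b\<bar> \<le> r then max (- (a*b)) (max (r*(a-b) - r\<^sup>2) (r*(b-a) - r\<^sup>2))
     else max (r*(a-b) - r\<^sup>2) (max (r*(a-b) - r\<^sup>2) (r*(b-a) - r\<^sup>2)))"
proof -
  have ab: "r * \<bar>a - b\<bar> - r\<^sup>2 = max (r*(a-b) - r\<^sup>2) (max (r*(a-b) - r\<^sup>2) (r*(b-a) - r\<^sup>2))" if "r \<ge> 0"
  proof (cases "a \<le> b")
    case True
    then have "r*(a-b) \<le> r*(b-a)" using that by (intro mult_left_mono) auto
    then show ?thesis using True by (simp add: max_def)
  next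
    case False
    then have "r*(b-a) \<le> r*(a-b)" using that by (intro mult_left_mono) auto
    then show ?thesis using False by (simp add: max_def)
  qed
  show ?thesis
  proof (cases "\<bar>b\<bar> \<le> r")
    case True
    then show ?thesis using Bk_inside[of a r b] Bk_outside[of a r b] ab[OF r]
      unfolding Bk_def by (auto simp: max_def)
  next
    case False
    then show ?thesis using ab[OF r] unfolding Bk_def by auto
  qed
qed

lemma Bk_convex:
  fixes r s b :: real
  assumes r: "r \<ge> 0" shows "convex_on UNIV (\<lambda>t. Bk r (t + s) b)"
proof (cases "\<bar>b\<bar> \<le> r")
  case True
  have "(\<lambda>t. Bk r (t+s) b) = (\<lambda>t. max ((-(s*b)) + (-b)*t) (max ((r*(s-b) - r\<^sup>2) + r*t) ((r*(b-s) - r\<^sup>2) + (-r)*t)))"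
    using True by (simp add: Bk_max[OF r] fun_eq_iff algebra_simps)
  then show ?thesis by (simp only:) (rule convex_max3)
next
  case False
  have "(\<lambda>t. Bk r (t+s) b) = (\<lambda>t. max ((r*(s-b) - r\<^sup>2) + r*t) (max ((r*(s-b) - r\<^sup>2) + r*t) ((r*(b-s) - r\<^sup>2) + (-r)*t)))"
    using False by (simp add: Bk_max[OF r] fun_eq_iff algebra_simps)
  then show ?thesis by (simp only:) (rule convex_max3)
qed

lemma Bk_le: fixes a b r :: real assumes "r \<ge> 0" shows "Bk r a b \<le> r * \<bar>a - b\<bar>"
proof (cases "\<bar>a\<bar> \<le> r \<and> \<bar>b\<bar> \<le> r")
  case True
  show ?thesis
  proof (cases "a*b \<ge> 0")
    case True
    have "0 \<le> r * \<bar>a - b\<bar>" using assms by simp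
    then show ?thesis using True unfolding Bk_def by auto
  next
    case False
    then have "\<bar>a - b\<bar> = \<bar>a\<bar> + \<bar>b\<bar>" by (auto simp: abs_if mult_less_0_iff zero_le_mult_iff)
    moreover have "\<bar>a\<bar> * \<bar>b\<bar> \<le> r * \<bar>b\<bar>" using True by (intro mult_right_mono) auto
    moreover have "0 \<le> r * \<bar>a\<bar>" using assms by simp
    moreover have "- (a*b) = \<bar>a\<bar> * \<bar>b\<bar>" using False by (simp add: abs_mult[symmetric])
    ultimately have "- (a*b) \<le> r * \<bar>a - b\<bar>" by (simp only: distrib_left)
    then show ?thesis using True unfolding Bk_def by simp
  qed
next
  case False then show ?thesis unfolding Bk_def by auto
qed

lemma Bk_diag_nonpos: "(r::real) \<ge> 0 \<Longrightarrow> Bk r v v \<le> 0"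
  unfolding Bk_def by auto

lemma Bk_diag_in: "\<bar>v::real\<bar> \<le> r \<Longrightarrow> Bk r v v = - v\<^sup>2"
  unfolding Bk_def by (simp add: power2_eq_square)

lemma convex_on_SUP:
  fixes G :: "'i \<Rightarrow> real \<Rightarrow> real"
  assumes "\<And>i. convex_on UNIV (G i)" "\<And>t. bdd_above (range (\<lambda>i. G i t))"
  shows "convex_on UNIV (\<lambda>t. SUP i. G i t)"
proof (rule convex_onI)
  fix u x y :: real assume u: "0<u" "u<1"
  show "(SUP i. G i ((1-u)*\<^sub>R x + u*\<^sub>R y)) \<le> (1-u) * (SUP i. G i x) + u * (SUP i. G i y)"
  proof (rule cSUP_least)
    show "UNIV \<noteq> {}" by simp
    fix i
    have "G i ((1-u)*\<^sub>R x + u*\<^sub>R y) \<le> (1-u)*G i x + u * G i y"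
      using convex_onD[OF assms(1)] u by simp
    also have "\<dots> \<le> (1-u) * (SUP i. G i x) + u * (SUP i. G i y)"
      using u by (intro add_mono mult_left_mono cSUP_upper assms(2)) auto
    finally show "G i ((1-u)*\<^sub>R x + u*\<^sub>R y) \<le> (1-u) * (SUP i. G i x) + u * (SUP i. G i y)" .
  qed
qed simp




locale semi =
  fixes g :: "real \<Rightarrow> real" and \<omega> :: "real \<Rightarrow> real"
  assumes md: "modulus \<omega>" and sc: "semiconvex_on UNIV g \<omega>"
begin

lemma om_nonneg: "t \<ge> 0 \<Longrightarrow> \<omega> t \<ge> 0"
  using md unfolding modulus_def by auto

lemma om_mono: "0 \<le> s \<Longrightarrow> s \<le> t \<Longrightarrow> \<omega> s \<le> \<omega> t"
  using md unfolding modulus_def by (auto intro: mono_onD)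

lemma chord:
  assumes s: "s > 0" and t: "t > 0"
  shows "(g u - g (u - t)) / t \<le> (g (u + s) - g u) / s + \<omega> (s + t)"
proof -
  define \<alpha> where "\<alpha> = t / (s + t)"
  have a: "0 < \<alpha>" "\<alpha> < 1" using s t by (auto simp: \<alpha>_def field_simps)
  have as: "\<alpha> * s = (1 - \<alpha>) * t" using s t by (simp add: \<alpha>_def field_simps)
  have "\<alpha> *\<^sub>R (u + s) + (1 - \<alpha>) *\<^sub>R (u - t) = u + (\<alpha> * s - (1 - \<alpha>) * t)"
    by (simp add: algebra_simps)
  then have pt: "\<alpha> *\<^sub>R (u + s) + (1 - \<alpha>) *\<^sub>R (u - t) = u" using as by simp
  have nr: "norm ((u + s) - (u - t)) = s + t" using s t by simp
  have "g (\<alpha> *\<^sub>R (u + s) + (1 - \<alpha>) *\<^sub>R (u - t)) \<le> \<alpha> * g (u + s) + (1 - \<alpha>) * g (u - t)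
          + \<alpha> * (1 - \<alpha>) * norm ((u + s) - (u - t)) * \<omega> (norm ((u + s) - (u - t)))"
    using sc a unfolding semiconvex_on_def by blast
  then have "g u \<le> \<alpha> * g (u + s) + (1 - \<alpha>) * g (u - t) + \<alpha> * (1 - \<alpha>) * (s + t) * \<omega> (s + t)"
    by (simp only: pt nr)
  then have "(s + t) * g u \<le> (s + t) * (\<alpha> * g (u + s) + (1 - \<alpha>) * g (u - t) + \<alpha> * (1 - \<alpha>) * (s + t) * \<omega> (s + t))"
    using s t by (intro mult_left_mono) auto
  moreover have "(s + t) * \<alpha> = t" "(s + t) * (1 - \<alpha>) = s" using s t by (auto simp: \<alpha>_def field_simps)
  ultimately have "(s + t) * g u \<le> t * g (u + s) + s * g (u - t) + t * (1 - \<alpha>) * (s + t) * \<omega> (s + t)"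
    by (simp add: distrib_left mult.assoc[symmetric])
  then have "(s + t) * g u \<le> t * g (u + s) + s * g (u - t) + t * s * \<omega> (s + t)"
  proof -
    have "t * (1 - \<alpha>) * (s + t) * \<omega> (s + t) = t * ((s + t) * (1 - \<alpha>)) * \<omega> (s + t)"
      by (simp only: ac_simps)
    also have "\<dots> = t * s * \<omega> (s + t)" using \<open>(s + t) * (1 - \<alpha>) = s\<close> by simp
    finally show ?thesis using \<open>(s + t) * g u \<le> t * g (u + s) + s * g (u - t) + t * (1 - \<alpha>) * (s + t) * \<omega> (s + t)\<close> by linarith
  qed
  then show ?thesis using s t by (simp add: field_simps)
qed

lemma chord2:
  assumes s: "s > 0" and t: "t > 0"
  shows "(g u - g (u - t)) / t - \<omega> (2 * t) \<le> (g (u + s) - g u) / s + \<omega> (2 * s)"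
proof -
  have "\<omega> (s + t) \<le> \<omega> (2 * s) + \<omega> (2 * t)"
  proof (cases "s \<le> t")
    case True then show ?thesis using om_mono[of "s+t" "2 * t"] om_nonneg[of "2 * s"] s t by auto
  next
    case False then show ?thesis using om_mono[of "s+t" "2 * s"] om_nonneg[of "2 * t"] s t by auto
  qed
  then show ?thesis using chord[OF s t, of u] by linarith
qed

definition p :: "real \<Rightarrow> real" where
  "p u = (SUP t\<in>{0<..}. (g u - g (u - t)) / t - \<omega> (2 * t))"

lemma bdd: "bdd_above ((\<lambda>t. (g u - g (u - t)) / t - \<omega> (2 * t)) ` {0<..})"
  using chord2[of 1] by (intro bdd_aboveI2[where M = "(g (u + 1) - g u) / 1 + \<omega> (2 * 1)"]) auto

lemma P1: "s > 0 \<Longrightarrow> p u \<le> (g (u + s) - g u) / s + \<omega> (2 * s)"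
  unfolding p_def by (rule cSUP_least) (auto intro: chord2)

lemma P2: "t > 0 \<Longrightarrow> (g u - g (u - t)) / t - \<omega> (2 * t) \<le> p u"
  unfolding p_def by (rule cSUP_upper[OF _ bdd]) auto

lemma LB: "g (u + v) \<ge> g u + v * p u - \<bar>v\<bar> * \<omega> (2 * \<bar>v\<bar>)"
proof (cases "v > 0")
  case True
  have "p u \<le> (g (u + v) - g u) / v + \<omega> (2 * v)" by (rule P1[OF True])
  then have "v * p u \<le> v * ((g (u + v) - g u) / v + \<omega> (2 * v))" using True by (intro mult_left_mono) auto
  moreover have "v * ((g (u + v) - g u) / v + \<omega> (2 * v)) = g (u + v) - g u + v * \<omega> (2 * v)"
    using True by (simp add: field_simps)
  ultimately show ?thesis using True by simp
next
  case False
  show ?thesis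
  proof (cases "v = 0")
    case True then show ?thesis by simp
  next
    case False
    with \<open>\<not> v > 0\<close> have v: "-v > 0" by auto
    have "(g u - g (u + v)) / (-v) - \<omega> (2 * (-v)) \<le> p u"
      using P2[OF v, of u] by simp
    then have "(-v) * ((g u - g (u + v)) / (-v) - \<omega> (2 * (-v))) \<le> (-v) * p u"
      using v by (intro mult_left_mono) auto
    moreover have "(-v) * ((g u - g (u + v)) / (-v) - \<omega> (2 * (-v))) = g u - g (u + v) + v * \<omega> (2 * (-v))"
      using v by (simp add: field_simps)
    ultimately have "g u - g (u + v) + v * \<omega> (2 * (-v)) \<le> (-v) * p u" by linarith
    moreover have "\<bar>v\<bar> = -v" using v by simp
    ultimately show ?thesis by (simp add: algebra_simps)
  qed
qed

lemma P3: "t > 0 \<Longrightarrow> p (u + t) \<ge> p u - 2 * \<omega> (2 * t)"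
  using P2[of t "u + t"] P1[of t u] by simp

lemma chainR:
  assumes t: "t > 0"
  shows "g (u + real n * t) \<ge> g u + real n * t * p u - (real n)\<^sup>2 * t * \<omega> (2 * t)
       \<and> p (u + real n * t) \<ge> p u - 2 * real n * \<omega> (2 * t)"
proof (induction n)
  case 0 then show ?case by simp
next
  case (Suc n)
  define u' where "u' = u + real n * t"
  have e: "u + real (Suc n) * t = u' + t" by (simp add: u'_def algebra_simps)
  have h1: "g (u' + t) \<ge> g u' + t * p u' - t * \<omega> (2 * t)" using LB[of u' t] t by simp
  have h2: "p (u' + t) \<ge> p u' - 2 * \<omega> (2 * t)" using P3[OF t] .
  have ih1: "g u' \<ge> g u + real n * t * p u - (real n)\<^sup>2 * t * \<omega> (2 * t)"
   and ih2: "p u' \<ge> p u - 2 * real n * \<omega> (2 * t)" using Suc unfolding u'_def by auto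
  have "t * p u' \<ge> t * (p u - 2 * real n * \<omega> (2 * t))" using ih2 t by (intro mult_left_mono) auto
  then have "g (u' + t) \<ge> g u + real (Suc n) * t * p u - (real (Suc n))\<^sup>2 * t * \<omega> (2 * t)"
    using h1 ih1 by (simp add: algebra_simps power2_eq_square)
  moreover have "p (u' + t) \<ge> p u - 2 * real (Suc n) * \<omega> (2 * t)"
    using h2 ih2 by (simp add: algebra_simps)
  ultimately show ?case unfolding e by simp
qed

lemma chainL:
  assumes t: "t > 0"
  shows "g (u - real n * t) \<ge> g u - real n * t * p u - (real n)\<^sup>2 * t * \<omega> (2 * t)
       \<and> p (u - real n * t) \<le> p u + 2 * real n * \<omega> (2 * t)"
proof (induction n)
  case 0 then show ?case by simp
next
  case (Suc n)
  define u' where "u' = u - real n * t"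
  have e: "u - real (Suc n) * t = u' + (- t)" by (simp add: u'_def algebra_simps)
  have h1: "g (u' + (-t)) \<ge> g u' - t * p u' - t * \<omega> (2 * t)" using LB[of u' "-t"] t by simp
  have h2: "p u' \<ge> p (u' + (-t)) - 2 * \<omega> (2 * t)" using P3[OF t, of "u' + (-t)"] by simp
  have ih1: "g u' \<ge> g u - real n * t * p u - (real n)\<^sup>2 * t * \<omega> (2 * t)"
   and ih2: "p u' \<le> p u + 2 * real n * \<omega> (2 * t)" using Suc unfolding u'_def by auto
  have "t * p u' \<le> t * (p u + 2 * real n * \<omega> (2 * t))" using ih2 t by (intro mult_left_mono) auto
  then have "g (u' + (-t)) \<ge> g u - real (Suc n) * t * p u - (real (Suc n))\<^sup>2 * t * \<omega> (2 * t)"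
    using h1 ih1 by (simp add: algebra_simps power2_eq_square)
  moreover have "p (u' + (-t)) \<le> p u + 2 * real (Suc n) * \<omega> (2 * t)"
    using h2 ih2 by (simp add: algebra_simps)
  ultimately show ?case unfolding e by simp
qed

lemma LB2:
  assumes v: "\<bar>v\<bar> \<ge> 1"
  shows "g (u + v) \<ge> g u + v * p u - 2 * \<omega> 2 * v\<^sup>2"
proof -
  define n where "n = nat \<lceil>\<bar>v\<bar>\<rceil>"
  have n1: "real n \<ge> \<bar>v\<bar>" "real n < \<bar>v\<bar> + 1" unfolding n_def by linarith+
  have npos: "real n > 0" using n1 v by linarith
  define t where "t = \<bar>v\<bar> / real n"
  have t: "t > 0" "t \<le> 1" using npos n1 v by (auto simp: t_def field_simps)
  have nt: "real n * t = \<bar>v\<bar>" using npos by (simp add: t_def)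
  have w: "\<omega> (2 * t) \<le> \<omega> 2" "\<omega> (2 * t) \<ge> 0" using om_mono[of "2 * t" 2] om_nonneg[of "2 * t"] t by auto
  have "(real n)\<^sup>2 * t * \<omega> (2 * t) = real n * \<bar>v\<bar> * \<omega> (2 * t)" using nt by (simp add: power2_eq_square)
  also have "\<dots> \<le> (\<bar>v\<bar> + 1) * \<bar>v\<bar> * \<omega> 2"
    using n1 w by (intro mult_mono) auto
  also have "\<dots> \<le> 2 * \<omega> 2 * v\<^sup>2"
  proof -
    have a1: "1 * \<bar>v\<bar> \<le> \<bar>v\<bar> * \<bar>v\<bar>" using v by (intro mult_right_mono) auto
    have a2: "\<bar>v\<bar> * \<bar>v\<bar> = v\<^sup>2" by (simp add: power2_eq_square)
    have "(\<bar>v\<bar> + 1) * \<bar>v\<bar> \<le> 2 * v\<^sup>2" using a1 a2 by (simp add: distrib_right)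
    then have "(\<bar>v\<bar> + 1) * \<bar>v\<bar> * \<omega> 2 \<le> 2 * v\<^sup>2 * \<omega> 2" using om_nonneg[of 2] by (intro mult_right_mono) auto
    then show ?thesis by (simp add: ac_simps)
  qed
  finally have q: "(real n)\<^sup>2 * t * \<omega> (2 * t) \<le> 2 * \<omega> 2 * v\<^sup>2" .
  show ?thesis
  proof (cases "v \<ge> 0")
    case True
    then have "u + v = u + real n * t" using nt by simp
    then show ?thesis using conjunct1[OF chainR[OF t(1), of u n]] q nt True by simp
  next
    case False
    then have "u + v = u - real n * t" using nt by simp
    then show ?thesis using conjunct1[OF chainL[OF t(1), of u n]] q nt False by simp
  qed
qed

definition psi :: "real \<Rightarrow> real" where
  "psi v = (if \<bar>v\<bar> \<le> 1 then \<bar>v\<bar> * \<omega> (2 * \<bar>v\<bar>) else 2 * \<omega> 2 * v\<^sup>2)"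

lemma LB3: "g (u + v) \<ge> g u + v * p u - psi v"
  using LB[of u v] LB2[of v u] unfolding psi_def by (auto split: if_splits)

lemma psi_le: "psi v \<le> 2 * \<omega> 2 * v\<^sup>2 + \<omega> 2"
proof (cases "\<bar>v\<bar> \<le> 1")
  case True
  have "\<bar>v\<bar> * \<omega> (2 * \<bar>v\<bar>) \<le> 1 * \<omega> 2"
    using True om_mono[of "2 * \<bar>v\<bar>" 2] om_nonneg[of "2 * \<bar>v\<bar>"] by (intro mult_mono) auto
  moreover have "0 \<le> 2 * \<omega> 2 * v\<^sup>2" using om_nonneg[of 2] by simp
  ultimately show ?thesis using True unfolding psi_def by simp
next
  case False then show ?thesis using om_nonneg[of 2] unfolding psi_def by simp
qed

end



locale semi2 = semi +
  fixes S0 :: real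
  assumes sb: "\<And>N. (\<Sum>k\<le>N. \<omega> ((1/2)^k)) \<le> S0"
begin

definition rr :: "nat \<Rightarrow> real" where "rr k = (1/2)^(Suc k)"
definition cc :: "nat \<Rightarrow> real" where "cc k = 4 * \<omega> (2 * rr k) / rr k"
definition dd :: "nat \<Rightarrow> real" where "dd N = rr N * \<omega> (2 * rr N)"
definition CC :: real where "CC = 2 * \<omega> 2"
definition Hs :: "nat \<Rightarrow> real \<Rightarrow> real \<Rightarrow> real" where
  "Hs N a b = (\<Sum>k\<le>N. cc k * Bk (rr k) a b)"
definition H :: "nat \<Rightarrow> real \<Rightarrow> real \<Rightarrow> real" where
  "H N a b = - CC * a * b + Hs N a b - dd N"

lemma rr_pos: "rr k > 0" by (simp add: rr_def)
lemma rr2: "2 * rr k = (1/2)^k" by (simp add: rr_def)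
lemma rr_le: "rr k \<le> 1/2"
  unfolding rr_def by (simp add: power_le_one)
lemma rr_Suc: "rr (Suc k) = rr k / 2" by (simp add: rr_def)
lemma cc_nonneg: "cc k \<ge> 0"
  using rr_pos[of k] om_nonneg[of "2 * rr k"] unfolding cc_def by simp
lemma ccrr: "cc k * rr k = 4 * \<omega> ((1/2)^k)"
  using rr_pos[of k] rr2[of k] unfolding cc_def by simp
lemma dd_nonneg: "dd N \<ge> 0"
  using rr_pos[of N] om_nonneg[of "2 * rr N"] unfolding dd_def by simp
lemma dd_le: "dd N \<le> \<omega> 2 * rr N"
proof -
  have "\<omega> (2 * rr N) \<le> \<omega> 2" using om_mono[of "2 * rr N" 2] rr_pos[of N] rr_le[of N] by simp
  then show ?thesis unfolding dd_def using rr_pos[of N] by (simp add: mult.commute mult_left_mono)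
qed

lemma Hs_le: "Hs N a b \<le> 4 * S0 * \<bar>a - b\<bar>"
proof -
  have "Hs N a b \<le> (\<Sum>k\<le>N. cc k * (rr k * \<bar>a - b\<bar>))"
    unfolding Hs_def by (intro sum_mono mult_left_mono Bk_le cc_nonneg less_imp_le[OF rr_pos])
  also have "\<dots> = (\<Sum>k\<le>N. 4 * \<omega> ((1/2)^k)) * \<bar>a - b\<bar>"
    by (simp add: sum_distrib_right ccrr[symmetric] mult.assoc)
  also have "\<dots> = 4 * (\<Sum>k\<le>N. \<omega> ((1/2)^k)) * \<bar>a - b\<bar>" by (simp add: sum_distrib_left)
  also have "\<dots> \<le> 4 * S0 * \<bar>a - b\<bar>" using sb[of N] by (intro mult_right_mono) auto
  finally show ?thesis .
qed

lemma term_nonpos: "cc k * Bk (rr k) v v \<le> 0"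
  using cc_nonneg[of k] Bk_diag_nonpos[of "rr k" v] rr_pos[of k]
  by (simp add: mult_nonneg_nonpos)

lemma Hs_diag_nonpos: "Hs N v v \<le> 0"
  unfolding Hs_def by (intro sum_nonpos term_nonpos)

lemma Hs_single: "k \<le> N \<Longrightarrow> Hs N v v \<le> cc k * Bk (rr k) v v"
proof -
  assume k: "k \<le> N"
  have "Hs N v v = cc k * Bk (rr k) v v + (\<Sum>j\<in>{..N} - {k}. cc j * Bk (rr j) v v)"
    unfolding Hs_def using k by (subst sum.remove[of _ k]) auto
  moreover have "(\<Sum>j\<in>{..N} - {k}. cc j * Bk (rr j) v v) \<le> 0"
    by (intro sum_nonpos term_nonpos)
  ultimately show ?thesis by simp
qed

lemma Hs_diag: "rr N < \<bar>v\<bar> \<Longrightarrow> \<bar>v\<bar> < 1/2 \<Longrightarrow> Hs N v v \<le> - (\<bar>v\<bar> * \<omega> (2 * \<bar>v\<bar>))"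
proof (induction N)
  case 0 then show ?case by (simp add: rr_def)
next
  case (Suc N)
  show ?case
  proof (cases "rr N < \<bar>v\<bar>")
    case True
    have "Hs (Suc N) v v = Hs N v v + cc (Suc N) * Bk (rr (Suc N)) v v"
      unfolding Hs_def by simp
    then show ?thesis using Suc.IH[OF True Suc.prems(2)] term_nonpos[of "Suc N" v] by linarith
  next
    case False
    then have vle: "\<bar>v\<bar> \<le> rr N" by simp
    have "Hs (Suc N) v v \<le> cc N * Bk (rr N) v v" by (rule Hs_single) simp
    also have "\<dots> = - (cc N * v\<^sup>2)" using Bk_diag_in[OF vle] by simp
    also have "\<dots> \<le> - (cc N * (rr N / 2)\<^sup>2)"
    proof -
      have "rr N / 2 \<le> \<bar>v\<bar>" using Suc.prems(1) rr_Suc[of N] by simp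
      then have "(rr N / 2)\<^sup>2 \<le> \<bar>v\<bar>\<^sup>2" using rr_pos[of N] by (intro power_mono) auto
      then have "cc N * (rr N / 2)\<^sup>2 \<le> cc N * v\<^sup>2" using cc_nonneg[of N] by (intro mult_left_mono) auto
      then show ?thesis by simp
    qed
    also have "\<dots> = - (rr N * \<omega> (2 * rr N))"
      using rr_pos[of N] unfolding cc_def by (simp add: power2_eq_square field_simps)
    also have "\<dots> \<le> - (\<bar>v\<bar> * \<omega> (2 * \<bar>v\<bar>))"
    proof -
      have "\<omega> (2 * \<bar>v\<bar>) \<le> \<omega> (2 * rr N)" using om_mono vle by simp
      then have "\<bar>v\<bar> * \<omega> (2 * \<bar>v\<bar>) \<le> rr N * \<omega> (2 * rr N)"
        using vle om_nonneg[of "2 * \<bar>v\<bar>"] by (intro mult_mono) auto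
      then show ?thesis by simp
    qed
    finally show ?thesis .
  qed
qed

lemma H_diag: "H N v v \<le> - psi v"
proof (cases "\<bar>v\<bar> \<ge> 1/2")
  case True
  have "psi v \<le> CC * v\<^sup>2"
  proof (cases "\<bar>v\<bar> \<le> 1")
    case True2: True
    have "\<bar>v\<bar> * \<omega> (2 * \<bar>v\<bar>) \<le> \<bar>v\<bar> * \<omega> 2"
      using True2 om_mono[of "2 * \<bar>v\<bar>" 2] by (intro mult_left_mono) auto
    also have "\<dots> \<le> (2 * \<bar>v\<bar>) * \<bar>v\<bar> * \<omega> 2"
    proof -
      have "\<bar>v\<bar> * 1 \<le> \<bar>v\<bar> * (2 * \<bar>v\<bar>)" using True by (intro mult_left_mono) auto
      then show ?thesis using om_nonneg[of 2] by (intro mult_right_mono) (auto simp: ac_simps)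
    qed
    also have "\<dots> = CC * v\<^sup>2" unfolding CC_def by (simp add: power2_eq_square)
    finally show ?thesis using True2 unfolding psi_def by simp
  next
    case False then show ?thesis unfolding psi_def CC_def by simp
  qed
  moreover have "H N v v = - (CC * v\<^sup>2) + Hs N v v - dd N"
    unfolding H_def by (simp add: power2_eq_square)
  ultimately show ?thesis using Hs_diag_nonpos[of N v] dd_nonneg[of N] by linarith
next
  case False
  then have ps: "psi v = \<bar>v\<bar> * \<omega> (2 * \<bar>v\<bar>)" unfolding psi_def by simp
  have c: "CC * v\<^sup>2 \<ge> 0" unfolding CC_def using om_nonneg[of 2] by simp
  have h: "H N v v = - (CC * v\<^sup>2) + Hs N v v - dd N"
    unfolding H_def by (simp add: power2_eq_square)
  show ?thesis
  proof (cases "\<bar>v\<bar> \<le> rr N")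
    case True
    have "\<omega> (2 * \<bar>v\<bar>) \<le> \<omega> (2 * rr N)" using om_mono True by simp
    then have "\<bar>v\<bar> * \<omega> (2 * \<bar>v\<bar>) \<le> dd N"
      unfolding dd_def using True om_nonneg[of "2 * \<bar>v\<bar>"] by (intro mult_mono) auto
    then show ?thesis using h ps c Hs_diag_nonpos[of N v] by linarith
  next
    case False
    then show ?thesis using h ps c Hs_diag[of N v] \<open>\<not> \<bar>v\<bar> \<ge> 1/2\<close> dd_nonneg[of N] by linarith
  qed
qed

lemma H00: "H N 0 0 = - dd N"
  unfolding H_def Hs_def Bk_def using rr_pos by (simp add: less_imp_le)

lemma H_upper: "H N a b \<le> - CC * a * b + 4 * S0 * \<bar>a - b\<bar>"
  unfolding H_def using Hs_le[of N a b] dd_nonneg[of N] by linarith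

lemma H_sym: "H N a b = H N b a"
  unfolding H_def Hs_def by (simp add: Bk_sym[of _ a b] mult.commute)

lemma Hs_convex: "convex_on UNIV (\<lambda>t. Hs N (t + s) b)"
proof (induction N)
  case 0
  show ?case unfolding Hs_def using Bk_convex[of "rr 0" s b] rr_pos[of 0] cc_nonneg[of 0]
    by (simp add: convex_on_cmul less_imp_le)
next
  case (Suc N)
  have e: "(\<lambda>t. Hs (Suc N) (t + s) b) = (\<lambda>t. Hs N (t + s) b + cc (Suc N) * Bk (rr (Suc N)) (t + s) b)"
    unfolding Hs_def by simp
  show ?case unfolding e
    using Suc.IH Bk_convex[of "rr (Suc N)" s b] rr_pos[of "Suc N"] cc_nonneg[of "Suc N"]
    by (intro convex_on_add convex_on_cmul) (auto simp: less_imp_le)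
qed

lemma H_convex: "convex_on UNIV (\<lambda>t. H N (t + s) b)"
proof -
  have e: "(\<lambda>t. H N (t + s) b) = (\<lambda>t. ((- CC * s * b - dd N) + (- CC * b) * t) + Hs N (t + s) b)"
    unfolding H_def by (simp add: fun_eq_iff algebra_simps)
  show ?thesis unfolding e by (intro convex_on_add convex_on_affine Hs_convex)
qed

end



context semi2 begin

definition F :: "real \<times> nat \<Rightarrow> real \<times> real \<Rightarrow> real" where
  "F i z = g (fst i) + p (fst i) * ((fst z + snd z) / 2 - fst i) + H (snd i) (fst z - fst i) (snd z - fst i)"

definition M :: "real \<times> real \<Rightarrow> real" where
  "M z = g ((fst z + snd z) / 2) + \<omega> 2 + CC * (fst z - snd z)\<^sup>2 / 4 + 4 * S0 * \<bar>fst z - snd z\<bar>"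

lemma F_le: "F i z \<le> M z"
proof -
  obtain u0 N where i: "i = (u0, N)" by (cases i)
  obtain x y where z: "z = (x, y)" by (cases z)
  define w where "w = (x + y) / 2 - u0"
  have lb: "g (u0 + w) \<ge> g u0 + w * p u0 - psi w" by (rule LB3)
  have uw: "u0 + w = (x + y) / 2" by (simp add: w_def)
  have ps: "psi w \<le> CC * w\<^sup>2 + \<omega> 2" using psi_le[of w] unfolding CC_def by simp
  have hu: "H N (x - u0) (y - u0) \<le> - CC * (x - u0) * (y - u0) + 4 * S0 * \<bar>x - y\<bar>"
    using H_upper[of N "x - u0" "y - u0"] by simp
  have ab: "CC * (x - u0) * (y - u0) = CC * w\<^sup>2 - CC * (x - y)\<^sup>2 / 4"
    unfolding w_def by (simp add: power2_eq_square field_simps)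
  have "F i z = g u0 + w * p u0 + H N (x - u0) (y - u0)"
    unfolding F_def i z w_def by simp
  then show ?thesis unfolding M_def z using lb uw ps hu ab by simp
qed

definition f :: "real \<times> real \<Rightarrow> real" where "f z = (SUP i. F i z)"

lemma bddF: "bdd_above (range (\<lambda>i. F i z))"
  by (rule bdd_aboveI2[where M="M z"]) (rule F_le)

lemma f_diag: "f (u, u) = g u"
proof (rule antisym)
  show "f (u, u) \<le> g u"
    unfolding f_def
  proof (rule cSUP_least)
    show "UNIV \<noteq> {}" by simp
    fix i :: "real \<times> nat"
    obtain u0 N where i: "i = (u0, N)" by (cases i)
    have "F i (u, u) = g u0 + (u - u0) * p u0 + H N (u - u0) (u - u0)"
      unfolding F_def i by simp
    also have "\<dots> \<le> g u0 + (u - u0) * p u0 - psi (u - u0)" using H_diag[of N "u - u0"] by simp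
    also have "\<dots> \<le> g u" using LB3[of u0 "u - u0"] by simp
    finally show "F i (u, u) \<le> g u" .
  qed
next
  show "g u \<le> f (u, u)"
  proof (rule field_le_epsilon)
    fix e :: real assume e: "e > 0"
    obtain n where n: "(1/2::real)^n < e / (\<omega> 2 + 1)"
      using real_arch_pow_inv[of "e / (\<omega> 2 + 1)" "1/2"] e om_nonneg[of 2] by auto
    have "dd n \<le> \<omega> 2 * rr n" by (rule dd_le)
    also have "\<dots> \<le> (\<omega> 2 + 1) * (1/2)^n"
      unfolding rr_def using om_nonneg[of 2] by (intro mult_mono) (auto simp: power_le_one)
    also have "\<dots> < e" using n om_nonneg[of 2] by (simp add: field_simps)
    finally have "dd n < e" .
    have "F (u, n) (u, u) = g u - dd n" unfolding F_def using H00[of n] by simp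
    moreover have "F (u, n) (u, u) \<le> f (u, u)" unfolding f_def by (rule cSUP_upper[OF _ bddF]) simp
    ultimately show "g u \<le> f (u, u) + e" using \<open>dd n < e\<close> by linarith
  qed
qed

lemma f_conv1: "convex_on UNIV (\<lambda>t. f (a + t, b))"
proof -
  have "convex_on UNIV (\<lambda>t. SUP i. F i (a + t, b))"
  proof (rule convex_on_SUP)
    fix i :: "real \<times> nat"
    obtain u0 N where i: "i = (u0, N)" by (cases i)
    have e: "(\<lambda>t. F i (a + t, b)) = (\<lambda>t. ((g u0 + p u0 * ((a + b) / 2 - u0)) + (p u0 / 2) * t)
                + H N (t + (a - u0)) (b - u0))"
      unfolding F_def i by (simp add: fun_eq_iff algebra_simps add_divide_distrib)
    show "convex_on UNIV (\<lambda>t. F i (a + t, b))" unfolding e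
      by (intro convex_on_add convex_on_affine H_convex)
  next
    fix t show "bdd_above (range (\<lambda>i. F i (a + t, b)))" by (rule bddF)
  qed
  then show ?thesis unfolding f_def .
qed

lemma f_conv2: "convex_on UNIV (\<lambda>t. f (a, b + t))"
proof -
  have "convex_on UNIV (\<lambda>t. SUP i. F i (a, b + t))"
  proof (rule convex_on_SUP)
    fix i :: "real \<times> nat"
    obtain u0 N where i: "i = (u0, N)" by (cases i)
    have e: "(\<lambda>t. F i (a, b + t)) = (\<lambda>t. ((g u0 + p u0 * ((a + b) / 2 - u0)) + (p u0 / 2) * t)
                + H N (t + (b - u0)) (a - u0))"
      unfolding F_def i by (simp add: fun_eq_iff algebra_simps add_divide_distrib H_sym[of N "a - u0"])
    show "convex_on UNIV (\<lambda>t. F i (a, b + t))" unfolding e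
      by (intro convex_on_add convex_on_affine H_convex)
  next
    fix t show "bdd_above (range (\<lambda>i. F i (a, b + t)))" by (rule bddF)
  qed
  then show ?thesis unfolding f_def .
qed

lemma f_sep: "separately_convex f"
  unfolding separately_convex_def
proof (intro allI ballI)
  fix x :: "real \<times> real" and b :: "real \<times> real"
  assume "b \<in> Basis"
  then have "b = (1, 0) \<or> b = (0, 1)" by (auto simp: Basis_prod_def)
  then show "convex_on UNIV (\<lambda>t. f (x + t *\<^sub>R b))"
  proof
    assume b: "b = (1, 0)"
    have "(\<lambda>t. f (x + t *\<^sub>R b)) = (\<lambda>t. f (fst x + t, snd x))" unfolding b by (cases x) auto
    then show ?thesis using f_conv1 by simp
  next
    assume b: "b = (0, 1)"
    have "(\<lambda>t. f (x + t *\<^sub>R b)) = (\<lambda>t. f (fst x, snd x + t))" unfolding b by (cases x) auto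
    then show ?thesis using f_conv2 by simp
  qed
qed

end



lemma dini_sum:
  fixes \<omega> :: "real \<Rightarrow> real"
  assumes md: "modulus \<omega>" and fin: "(\<integral>\<^sup>+ t \<in> {0<..<1}. ennreal (\<omega> t / t) \<partial>lborel) < \<infinity>"
  shows "\<exists>S0. \<forall>N. (\<Sum>k\<le>N. \<omega> ((1/2)^k)) \<le> S0"
proof -
  have om_nonneg: "\<And>t. t \<ge> 0 \<Longrightarrow> \<omega> t \<ge> 0" using md unfolding modulus_def by auto
  have om_mono: "\<And>s t. 0 \<le> s \<Longrightarrow> s \<le> t \<Longrightarrow> \<omega> s \<le> \<omega> t"
    using md unfolding modulus_def by (auto intro: mono_onD)
  define Itg where "Itg = (\<integral>\<^sup>+ t \<in> {0<..<1}. ennreal (\<omega> t / t) \<partial>lborel)"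
  define I0 where "I0 = enn2real Itg"
  have ItgI0: "Itg = ennreal I0" unfolding I0_def using fin Itg_def by (simp add: ennreal_enn2real)
  have I0nn: "I0 \<ge> 0" unfolding I0_def by simp
  define J where "J k = {(1/2::real)^(Suc k) <..< (1/2)^k}" for k :: nat
  define a where "a k = \<omega> ((1/2)^(Suc k)) / (1/2)^k" for k :: nat
  have a_nn: "a k \<ge> 0" for k unfolding a_def using om_nonneg[of "(1/2)^(Suc k)"] by simp
  have disj: "j = k" if "t \<in> J j" "t \<in> J k" for t j k
  proof (rule ccontr)
    assume "j \<noteq> k"
    then consider "j < k" | "k < j" by linarith
    then show False
    proof cases
      case 1
      then have "(1/2::real)^k \<le> (1/2)^(Suc j)" by (intro power_decreasing) auto
      then show False using that unfolding J_def by auto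
    next
      case 2
      then have "(1/2::real)^j \<le> (1/2)^(Suc k)" by (intro power_decreasing) auto
      then show False using that unfolding J_def by auto
    qed
  qed
  have pw: "(\<Sum>k<N. ennreal (a k) * indicator (J k) t) \<le> ennreal (\<omega> t / t) * indicator {0<..<1} t"
    for N t
  proof (cases "\<exists>k<N. t \<in> J k")
    case True
    then obtain k where k: "k < N" "t \<in> J k" by auto
    have "(\<Sum>k<N. ennreal (a k) * indicator (J k) t) = ennreal (a k) * indicator (J k) t
           + (\<Sum>j\<in>{..<N} - {k}. ennreal (a j) * indicator (J j) t)"
      using k by (subst sum.remove[of _ k]) auto
    also have "(\<Sum>j\<in>{..<N} - {k}. ennreal (a j) * indicator (J j) t) = 0"
      using disj k by (intro sum.neutral) (auto simp: indicator_def)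
    finally have s: "(\<Sum>k<N. ennreal (a k) * indicator (J k) t) = ennreal (a k)" using k by simp
    have tpos: "t > 0" "t < (1/2)^k" "(1/2)^(Suc k) < t" using k unfolding J_def by auto
    have t1: "t < 1" using tpos(2) power_le_one[of "1/2::real" k] by simp
    have "a k \<le> \<omega> t / t"
      unfolding a_def using tpos om_mono[of "(1/2)^(Suc k)" t] om_nonneg[of t]
      by (intro frac_le) auto
    then show ?thesis using s tpos t1 by (simp add: ennreal_leI)
  next
    case False
    then have "(\<Sum>k<N. ennreal (a k) * indicator (J k) t) = 0"
      by (intro sum.neutral) (auto simp: indicator_def)
    then show ?thesis by simp
  qed
  have key: "(\<Sum>k<N. \<omega> ((1/2)^(Suc k))) / 2 \<le> I0" for N
  proof -
    have "(\<integral>\<^sup>+ t. (\<Sum>k<N. ennreal (a k) * indicator (J k) t) \<partial>lborel) \<le> Itg"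
      unfolding Itg_def by (intro nn_integral_mono pw)
    moreover have "(\<integral>\<^sup>+ t. (\<Sum>k<N. ennreal (a k) * indicator (J k) t) \<partial>lborel)
        = (\<Sum>k<N. (\<integral>\<^sup>+ t. ennreal (a k) * indicator (J k) t \<partial>lborel))"
      by (intro nn_integral_sum) (auto simp: J_def)
    moreover have "(\<integral>\<^sup>+ t. ennreal (a k) * indicator (J k) t \<partial>lborel) = ennreal (\<omega> ((1/2)^(Suc k)) / 2)" for k
    proof -
      have "(\<integral>\<^sup>+ t. ennreal (a k) * indicator (J k) t \<partial>lborel) = ennreal (a k) * emeasure lborel (J k)"
        by (intro nn_integral_cmult_indicator) (auto simp: J_def)
      also have "emeasure lborel (J k) = ennreal ((1/2)^k - (1/2)^(Suc k))"
        unfolding J_def by (intro emeasure_lborel_Ioo) (auto intro: power_decreasing)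
      also have "ennreal (a k) * ennreal ((1/2)^k - (1/2)^(Suc k)) = ennreal (a k * ((1/2)^k - (1/2)^(Suc k)))"
        by (rule ennreal_mult[symmetric]) (use a_nn in \<open>auto intro: power_decreasing\<close>)
      also have "a k * ((1/2)^k - (1/2)^(Suc k)) = \<omega> ((1/2)^(Suc k)) / 2"
        unfolding a_def by (simp add: field_simps)
      finally show ?thesis .
    qed
    ultimately have "(\<Sum>k<N. ennreal (\<omega> ((1/2)^(Suc k)) / 2)) \<le> ennreal I0" using ItgI0 by simp
    moreover have "(\<Sum>k<N. ennreal (\<omega> ((1/2)^(Suc k)) / 2)) = ennreal (\<Sum>k<N. \<omega> ((1/2)^(Suc k)) / 2)"
      using om_nonneg by (intro sum_ennreal) auto
    ultimately have "(\<Sum>k<N. \<omega> ((1/2)^(Suc k)) / 2) \<le> I0" using I0nn by (simp add: ennreal_le_iff)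
    then show ?thesis by (simp add: sum_divide_distrib)
  qed
  show ?thesis
  proof (intro exI allI)
    fix N
    have "(\<Sum>k\<le>N. \<omega> ((1/2)^k)) = (\<Sum>k<Suc N. \<omega> ((1/2)^k))" by (simp add: lessThan_Suc_atMost)
    also have "\<dots> = \<omega> 1 + (\<Sum>k<N. \<omega> ((1/2)^(Suc k)))" by (subst sum.lessThan_Suc_shift) simp
    also have "\<dots> \<le> \<omega> 1 + 2 * I0" using key[of N] by simp
    finally show "(\<Sum>k\<le>N. \<omega> ((1/2)^k)) \<le> \<omega> 1 + 2 * I0" .
  qed
qed



theorem theorem1p2:
  fixes g :: "real \<Rightarrow> real" and \<omega> :: "real \<Rightarrow> real"
  assumes "modulus \<omega>"
    and "semiconvex_on UNIV g \<omega>"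
    and "(\<integral>\<^sup>+ t \<in> {0<..<1}. ennreal (\<omega> t / t) \<partial>lborel) < \<infinity>"
  shows "\<exists>f :: real \<times> real \<Rightarrow> real. separately_convex f \<and> (\<forall>u. f (u, u) = g u)"
proof -
  obtain S0 where S0: "\<And>N. (\<Sum>k\<le>N. \<omega> ((1/2)^k)) \<le> S0"
    using dini_sum[OF assms(1) assms(3)] by blast
  interpret semi2 g \<omega> S0
    by unfold_locales (use assms S0 in auto)
  show ?thesis using f_sep f_diag by blast
qed

end
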